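(* Suppose $\Re s=1$, $u\ge1$, and $|s|>u$. For integers $\nu\ge0$, \[ \left|\frac{\partial^{\nu}}{\partial u^{\nu}}\left(s\frac{\partial}{\partial s}G(u,s)\right)\right|\ll_{\nu}\frac{|s|^{\nu}}{u^{2\nu}}, \] with implied constant depending only on $\nu$.
   Context: $G(u,s):=\int_{0}^{1/u}\frac{1-e^{-ts}}{t}\,dt$. *)

theory Defs
  imports "HOL-Analysis.Analysis"
begin

text \<open>G(u,s) = integral over [0, 1/u] of (1 - e^(-ts))/t dt, for real u > 0 and complex s.
  The integrand's value at t = 0 is irrelevant (null set).\<close>
definition G :: "real \<Rightarrow> complex \<Rightarrow> complex" where
  "G u s = integral {0..1/u} (\<lambda>t::real. (1 - exp (- (of_real t * s))) / of_real t)"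

definition nth_vderiv :: "nat \<Rightarrow> (real \<Rightarrow> complex) \<Rightarrow> real \<Rightarrow> complex" where
  "nth_vderiv n f = ((\<lambda>g x. vector_derivative g (at x)) ^^ n) f"

end

theory Submission
  imports Defs
begin


definition gq :: "complex \<Rightarrow> complex" where
  "gq w = (if w = 0 then 1 else (1 - exp (-w)) / w)"

lemma gq_isCont: "isCont gq w"
proof (cases "w = 0")
  case True
  have "((\<lambda>w::complex. 1 - exp (-w)) has_field_derivative 1) (at 0)"
    by (rule derivative_eq_intros refl | simp)+
  then have "((\<lambda>y. (1 - exp (-y)) / y) \<longlongrightarrow> 1) (at (0::complex))" by (simp add: has_field_derivative_iff)
  moreover have "eventually (\<lambda>y. (1 - exp (-y)) / y = gq y) (at (0::complex))"
    unfolding eventually_at_filter by (intro always_eventually) (simp add: gq_def)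
  ultimately have "(gq \<longlongrightarrow> 1) (at 0)" by (rule Lim_transform_eventually)
  then have "(gq \<longlongrightarrow> gq 0) (at 0)" by (simp add: gq_def)
  then show ?thesis using True by (simp add: isCont_def)
next
  case False
  have c: "isCont (\<lambda>w. (1 - exp (-w)) / w) w" using False by (intro continuous_intros) auto
  have "eventually (\<lambda>y. y \<noteq> 0) (nhds w)" using False
    unfolding eventually_nhds by (intro exI[of _ "-{0}"]) auto
  then have "eventually (\<lambda>y. (1 - exp (-y)) / y = gq y) (nhds w)"
    by eventually_elim (simp add: gq_def)
  then have "isCont (\<lambda>w. (1 - exp (-w)) / w) w = isCont gq w" by (rule isCont_cong)
  then show ?thesis using c by simp
qed

lemma G_eq: "G v z = integral {0..1/v} (\<lambda>t. z * gq (of_real t * z))"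
  unfolding G_def
proof (rule integral_spike[of "{0}"])
  fix t assume "t \<in> {0..1/v} - {0}"
  then have "t \<noteq> 0" by auto
  then show "z * gq (of_real t * z) = (1 - exp (- (of_real t * z))) / of_real t"
    by (cases "z = 0") (auto simp: gq_def field_simps)
qed auto

lemma G_deriv:
  assumes "s \<noteq> 0" "v > 0"
  shows "deriv (\<lambda>z. G v z) s = (1 - exp (- s / of_real v)) / s"
proof -
  define f where "f = (\<lambda>z (t::real). z * gq (of_real t * z))"
  have d: "((\<lambda>z. integral (cbox 0 (1/v)) (f z)) has_field_derivative
        integral (cbox 0 (1/v)) (\<lambda>t. exp (- (of_real t * s)))) (at s within UNIV)"
  proof (rule leibniz_rule_field_derivative[where fx="\<lambda>z t. exp (- (of_real t * z))"])
    fix z :: complex and t :: real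
    show "((\<lambda>z. f z t) has_field_derivative exp (- (of_real t * z))) (at z within UNIV)"
    proof (cases "t = 0")
      case True
      then show ?thesis by (simp add: f_def gq_def)
    next
      case False
      have "((\<lambda>z. (1 - exp (- (of_real t * z))) / of_real t) has_field_derivative exp (- (of_real t * z))) (at z)"
        by (rule derivative_eq_intros refl | simp add: False)+
      moreover have "(\<lambda>z. f z t) = (\<lambda>z. (1 - exp (- (of_real t * z))) / of_real t)"
        using False by (auto simp: f_def gq_def field_simps fun_eq_iff)
      ultimately show ?thesis by simp
    qed
  next
    fix z :: complex
    have "continuous_on {0..1/v} (f z)" unfolding f_def
      by (intro continuous_intros continuous_on_compose2[OF continuous_at_imp_continuous_on, of UNIV gq]) 
         (auto simp: gq_isCont)
    then show "f z integrable_on cbox 0 (1/v)" by (simp add: integrable_continuous_interval)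
  next
    show "continuous_on (UNIV \<times> cbox 0 (1/v)) (\<lambda>(z, t). exp (- (complex_of_real t * z)))"
      by (auto simp: case_prod_beta intro!: continuous_intros)
  qed auto
  have Geq: "(\<lambda>z. G v z) = (\<lambda>z. integral (cbox 0 (1/v)) (f z))"
    by (simp add: fun_eq_iff G_eq f_def)
  have "((\<lambda>t. - exp (- (of_real t * s)) / s) has_vector_derivative exp (- (of_real t * s))) (at t within {0..1/v})" for t
  proof -
    have "((\<lambda>w. - exp (- (w * s)) / s) has_field_derivative exp (- (of_real t * s))) (at (of_real t))"
      by (rule derivative_eq_intros refl | simp add: assms)+
    then show ?thesis by (rule has_vector_derivative_real_field)
  qed
  then have "((\<lambda>t. exp (- (of_real t * s))) has_integral
      ((- exp (- (of_real (1/v) * s)) / s) - (- exp (- (of_real 0 * s)) / s))) {0..1/v}"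
    using assms by (intro fundamental_theorem_of_calculus) auto
  then have "integral {0..1/v} (\<lambda>t. exp (- (of_real t * s))) = (1 - exp (- s / of_real v)) / s"
    by (simp add: integral_unique divide_simps)
  with d show ?thesis unfolding Geq by (intro DERIV_imp_deriv) simp

qed


fun ac :: "nat \<Rightarrow> nat \<Rightarrow> real" where
  "ac 0 k = (if k = 0 then 1 else 0)"
| "ac (Suc n) k = (if k = 0 then 0 else ac n (k - 1)) - real (n + k) * ac n k"

lemma ac_zero: "k > n \<Longrightarrow> ac n k = 0"
  by (induction n arbitrary: k) auto

definition HH :: "complex \<Rightarrow> nat \<Rightarrow> complex \<Rightarrow> complex" where
  "HH s n w = (if n = 0 then 1 else 0) - exp (- s / w) * (\<Sum>k\<le>n. of_real (ac n k) * s ^ k / w ^ (n + k))"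

lemma term_deriv:
  assumes "w \<noteq> 0"
  shows "((\<lambda>w. c / w ^ m) has_field_derivative (- of_nat m * c / w ^ (m + 1))) (at (w::complex))"
proof -
  have "((\<lambda>w. c / w ^ m) has_field_derivative (- (c * (of_nat m * w ^ (m - 1))) / (w ^ m * w ^ m))) (at w)"
    by (rule derivative_eq_intros refl | simp add: assms)+
  moreover have "- (c * (of_nat m * w ^ (m - 1))) / (w ^ m * w ^ m) = - of_nat m * c / w ^ (m + 1)"
  proof (cases m)
    case (Suc k)
    then show ?thesis using assms by (simp add: field_simps power_add)
  qed simp
  ultimately show ?thesis by simp
qed

lemma sum_shift:
  fixes s w :: complex
  assumes "w \<noteq> 0"
  shows "(\<Sum>k\<le>Suc n. of_real (ac (Suc n) k) * s ^ k / w ^ (Suc n + k)) =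
    s / w^2 * (\<Sum>k\<le>n. of_real (ac n k) * s ^ k / w ^ (n + k))
    + (\<Sum>k\<le>n. - of_nat (n + k) * (of_real (ac n k) * s ^ k) / w ^ (n + k + 1))"
proof -
  have 1: "(\<Sum>k\<le>Suc n. of_real (ac (Suc n) k) * s ^ k / w ^ (Suc n + k)) =
     (\<Sum>k\<le>Suc n. of_real (if k = 0 then 0 else ac n (k - 1)) * s ^ k / w ^ (Suc n + k))
     - (\<Sum>k\<le>Suc n. of_real (real (n + k) * ac n k) * s ^ k / w ^ (Suc n + k))"
    unfolding sum_subtractf[symmetric]
    by (rule sum.cong[OF refl]) (simp only: ac.simps of_real_diff left_diff_distrib diff_divide_distrib)
  have 2: "(\<Sum>k\<le>Suc n. of_real (if k = 0 then 0 else ac n (k - 1)) * s ^ k / w ^ (Suc n + k))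
     = (\<Sum>k\<le>n. of_real (ac n k) * s ^ Suc k / w ^ (Suc n + Suc k))"
    by (subst sum.atMost_Suc_shift) simp
  have 3: "(\<Sum>k\<le>n. of_real (ac n k) * s ^ Suc k / w ^ (Suc n + Suc k))
      = s / w^2 * (\<Sum>k\<le>n. of_real (ac n k) * s ^ k / w ^ (n + k))"
    unfolding sum_distrib_left
  proof (rule sum.cong[OF refl])
    fix k
    have eq: "w ^ (Suc n + Suc k) = w^2 * w ^ (n + k)" by (simp add: power2_eq_square)
    show "of_real (ac n k) * s ^ Suc k / w ^ (Suc n + Suc k) = s / w\<^sup>2 * (of_real (ac n k) * s ^ k / w ^ (n + k))"
      unfolding eq power_Suc times_divide_times_eq by (simp only: ac_simps)
  qed
  have 4: "(\<Sum>k\<le>Suc n. of_real (real (n + k) * ac n k) * s ^ k / w ^ (Suc n + k))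
     = (\<Sum>k\<le>n. of_real (real (n + k) * ac n k) * s ^ k / w ^ (Suc n + k))"
    by (simp add: ac_zero)
  have 5: "(\<Sum>k\<le>n. of_real (real (n + k) * ac n k) * s ^ k / w ^ (Suc n + k))
     = - (\<Sum>k\<le>n. - of_nat (n + k) * (of_real (ac n k) * s ^ k) / w ^ (n + k + 1))"
    unfolding sum_negf[symmetric]
    by (rule sum.cong[OF refl]) (simp add: field_simps assms)
  show ?thesis unfolding 1 2 3 4 5 by simp
qed

lemma HH_deriv:
  fixes s w :: complex
  assumes "w \<noteq> 0"
  shows "(HH s n has_field_derivative HH s (Suc n) w) (at w)"
proof -
  define P where "P = (\<lambda>w. \<Sum>k\<le>n. of_real (ac n k) * s ^ k / w ^ (n + k))"
  define P' where "P' = (\<Sum>k\<le>n. - of_nat (n + k) * (of_real (ac n k) * s ^ k) / w ^ (n + k + 1))"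
  have dP: "(P has_field_derivative P') (at w)"
    unfolding P_def P'_def by (rule DERIV_sum) (rule term_deriv[OF assms])
  have dE: "((\<lambda>w. exp (- s / w)) has_field_derivative exp (- s / w) * (s / w^2)) (at w)"
  proof -
    have "((\<lambda>w. exp (- s / w)) has_field_derivative exp (- s / w) * (- (- s * 1) / (w * w))) (at w)"
      by (rule derivative_eq_intros refl | simp add: assms)+
    then show ?thesis by (simp add: power2_eq_square)
  qed
  have "((\<lambda>w. (if n = 0 then 1 else 0) - exp (- s / w) * P w) has_field_derivative
      0 - (exp (- s / w) * (s / w^2) * P w + P' * exp (- s / w))) (at w)"
    by (intro DERIV_diff DERIV_mult dE dP DERIV_const)
  moreover have "HH s n = (\<lambda>w. (if n = 0 then 1 else 0) - exp (- s / w) * P w)"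
    by (simp add: HH_def P_def fun_eq_iff)
  moreover have "0 - (exp (- s / w) * (s / w^2) * P w + P' * exp (- s / w)) = HH s (Suc n) w"
    unfolding HH_def P_def P'_def using sum_shift[OF assms, of n s]
    by (simp add: algebra_simps)
  ultimately show ?thesis by simp
qed


lemma pow_ratio:
  fixes a u :: real
  assumes "u > 0" "a \<ge> u" "k \<le> n"
  shows "a ^ k / u ^ (n + k) \<le> a ^ n / u ^ (2 * n)"
proof -
  have a0: "a \<ge> 0" using assms by simp
  have "a ^ k * u ^ (n - k) \<le> a ^ k * a ^ (n - k)"
    using assms a0 by (intro mult_left_mono power_mono) auto
  also have "\<dots> = a ^ n" using assms(3) by (simp add: power_add[symmetric])
  finally have 1: "a ^ k * u ^ (n - k) \<le> a ^ n" .
  have 2: "u ^ (2 * n) = u ^ (n + k) * u ^ (n - k)" using assms(3)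
    by (simp add: power_add[symmetric] mult_2)
  have "a ^ k / u ^ (n + k) = a ^ k * u ^ (n - k) / u ^ (2 * n)"
    using assms(1) by (simp add: 2)
  also have "\<dots> \<le> a ^ n / u ^ (2 * n)"
    using 1 assms(1) by (intro divide_right_mono) auto
  finally show ?thesis .
qed

lemma HH_bound:
  fixes s :: complex and u :: real
  assumes "Re s = 1" "u \<ge> 1" "norm s > u"
  shows "norm (HH s n (of_real u)) \<le> (2 + (\<Sum>k\<le>n. \<bar>ac n k\<bar>)) * norm s ^ n / u ^ (2 * n)"
proof -
  have u0: "u > 0" using assms by simp
  have ne: "norm (exp (- s / of_real u)) \<le> 1"
    using u0 assms(1) by (simp add: norm_exp_eq_Re Re_divide_of_real)
  define R where "R = norm s ^ n / u ^ (2 * n)"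
  have R0: "R \<ge> 0" using u0 by (simp add: R_def)
  have tb: "norm (of_real (ac n k) * s ^ k / of_real u ^ (n + k)) \<le> \<bar>ac n k\<bar> * R" if "k \<le> n" for k
  proof -
    have "norm (of_real (ac n k) * s ^ k / of_real u ^ (n + k)) = \<bar>ac n k\<bar> * (norm s ^ k / u ^ (n + k))"
      using u0 by (simp add: norm_divide norm_mult norm_power)
    also have "\<dots> \<le> \<bar>ac n k\<bar> * R" unfolding R_def
      using pow_ratio[of u "norm s" k n] u0 assms that by (intro mult_left_mono) auto
    finally show ?thesis .
  qed
  have sb: "norm (\<Sum>k\<le>n. of_real (ac n k) * s ^ k / of_real u ^ (n + k)) \<le> (\<Sum>k\<le>n. \<bar>ac n k\<bar>) * R"
    by (rule order_trans[OF norm_sum]) (unfold sum_distrib_right, rule sum_mono, simp add: tb)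
  show ?thesis
  proof (cases "n = 0")
    case True
    have "norm (HH s n (of_real u)) = norm (1 - exp (- s / of_real u))"
      using True by (simp add: HH_def)
    also have "\<dots> \<le> 1 + norm (exp (- s / of_real u))" by (rule norm_triangle_ineq4[THEN order_trans]) simp
    also have "\<dots> \<le> 2" using ne by simp
    finally show ?thesis using True by simp
  next
    case False
    have "norm (HH s n (of_real u)) = norm (exp (- s / of_real u)) *
        norm (\<Sum>k\<le>n. of_real (ac n k) * s ^ k / of_real u ^ (n + k))"
      using False by (simp add: HH_def norm_mult)
    also have "\<dots> \<le> 1 * ((\<Sum>k\<le>n. \<bar>ac n k\<bar>) * R)"
      using ne sb by (intro mult_mono) auto
    also have "\<dots> \<le> (2 + (\<Sum>k\<le>n. \<bar>ac n k\<bar>)) * R"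
      using R0 by (simp add: mult_right_mono)
    finally show ?thesis by (simp add: R_def)
  qed
qed

theorem lemma10:
  fixes \<nu> :: nat
  shows "\<exists>C::real. \<forall>(u::real) (s::complex).
           Re s = 1 \<longrightarrow> u \<ge> 1 \<longrightarrow> norm s > u \<longrightarrow>
           norm (nth_vderiv \<nu> (\<lambda>v. s * deriv (\<lambda>z. G v z) s) u)
             \<le> C * norm s ^ \<nu> / u ^ (2 * \<nu>)"
proof (intro exI allI impI)
  fix u :: real and s :: complex
  assume a: "Re s = 1" "u \<ge> 1" "norm s > u"
  have s0: "s \<noteq> 0" using a by auto
  define F where "F = (\<lambda>v. s * deriv (\<lambda>z. G v z) s)"
  have key: "\<forall>v>0. nth_vderiv n F v = HH s n (of_real v)" for n
  proof (induction n)
    case 0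
    show ?case using s0 by (simp add: nth_vderiv_def F_def G_deriv HH_def)
  next
    case (Suc n)
    show ?case
    proof (intro allI impI)
      fix x :: real assume x: "x > 0"
      have "((\<lambda>v. HH s n (of_real v)) has_vector_derivative HH s (Suc n) (of_real x)) (at x)"
        by (rule has_vector_derivative_real_field[OF HH_deriv]) (use x in simp)
      then have "(nth_vderiv n F has_vector_derivative HH s (Suc n) (of_real x)) (at x)"
        by (rule has_vector_derivative_transform_within_open[where S="{0<..}"]) (use x Suc in auto)
      then have "vector_derivative (nth_vderiv n F) (at x) = HH s (Suc n) (of_real x)"
        by (rule vector_derivative_at)
      then show "nth_vderiv (Suc n) F x = HH s (Suc n) (of_real x)"
        by (simp add: nth_vderiv_def)
    qed
  qed
  have "nth_vderiv \<nu> F u = HH s \<nu> (of_real u)" using key a by auto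
  then show "norm (nth_vderiv \<nu> (\<lambda>v. s * deriv (\<lambda>z. G v z) s) u)
       \<le> (2 + (\<Sum>k\<le>\<nu>. \<bar>ac \<nu> k\<bar>)) * norm s ^ \<nu> / u ^ (2 * \<nu>)"
    using HH_bound[OF a] by (simp add: F_def)
qed

end
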